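(* Consider the scheduler $\texttt{UNK}$ described in the context, run on a task arrival process $\mathcal{T}$ such that, at every time from time $0$ until $\texttt{UNK}$ completes its final task, $\texttt{UNK}$ has at least one alive task. Then the total measure of times in this period at which $\texttt{UNK}$ is unsaturated is at most half the length of the period (i.e., at most half of $\texttt{UNK}$'s awake time).
   Context: Serial-parallel scheduling problem: $p$ identical processors; a task arrival process is a finite set of tasks $\tau_i=(\sigma_i,\pi_i,t_i)$ with arrival time $t_i\ge 0$, serial work $\sigma_i$, parallel work $\pi_i$, $1\le\pi_i/\sigma_i\le p$. A task runs either as a serial job (work $\sigma_i$, at most one processor at a time) or as a parallel job (work $\pi_i$, any number of processors, rate equal to number of processors); the choice is irrevocable once the task is started; time is continuous and preemption is allowed. A task is alive from arrival until completion; awake time is the measure of times with an alive task. The scheduler $\texttt{UNK}$: whenever there are idle processors, $\texttt{UNK}$ takes any arrived but not-yet-started task $\tau_i$ and, if $\tau_i$ arrived more than $\sigma_i$ time ago, starts its serial job; otherwise it starts its parallel job. At each time $\texttt{UNK}$ allocates one processor to each of the (at most $p$) running serial jobs; at most one parallel job runs at a time, and it receives all processors not used by serial jobs. $\texttt{UNK}$ is saturated at a time if all $p$ processors are in use, and unsaturated otherwise. *)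

theory Defs
  imports "HOL-Analysis.Analysis"
begin

(* Tasks are indexed by a finite set I :: 'a set.  Task i has serial work sig i,
   parallel work par i and arrival time t i.  A run of UNK is described by the
   start time s i and the completion time c i of every task. *)

definition is_serial :: "('a \<Rightarrow> real) \<Rightarrow> ('a \<Rightarrow> real) \<Rightarrow> ('a \<Rightarrow> real) \<Rightarrow> 'a \<Rightarrow> bool" where
  "is_serial sig t s i \<longleftrightarrow> s i - t i > sig i"

text \<open>Number of running serial jobs at time x (each uses exactly one processor).\<close>
definition nser :: "'a set \<Rightarrow> ('a \<Rightarrow> real) \<Rightarrow> ('a \<Rightarrow> real) \<Rightarrow> ('a \<Rightarrow> real) \<Rightarrow> ('a \<Rightarrow> real)
    \<Rightarrow> real \<Rightarrow> nat" where
  "nser I sig t s c x = card {j \<in> I. is_serial sig t s j \<and> s j \<le> x \<and> x < c j}"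

definition par_active :: "'a set \<Rightarrow> ('a \<Rightarrow> real) \<Rightarrow> ('a \<Rightarrow> real) \<Rightarrow> ('a \<Rightarrow> real) \<Rightarrow> ('a \<Rightarrow> real)
    \<Rightarrow> real \<Rightarrow> bool" where
  "par_active I sig t s c x \<longleftrightarrow> (\<exists>j\<in>I. \<not> is_serial sig t s j \<and> s j \<le> x \<and> x < c j)"

text \<open>All p processors are in use: a running parallel job receives all processors
  not used by serial jobs.\<close>
definition saturated :: "nat \<Rightarrow> 'a set \<Rightarrow> ('a \<Rightarrow> real) \<Rightarrow> ('a \<Rightarrow> real) \<Rightarrow> ('a \<Rightarrow> real)
    \<Rightarrow> ('a \<Rightarrow> real) \<Rightarrow> real \<Rightarrow> bool" where
  "saturated p I sig t s c x \<longleftrightarrow> par_active I sig t s c x \<or> nser I sig t s c x = p"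

definition valid_tasks :: "nat \<Rightarrow> 'a set \<Rightarrow> ('a \<Rightarrow> real) \<Rightarrow> ('a \<Rightarrow> real) \<Rightarrow> ('a \<Rightarrow> real) \<Rightarrow> bool" where
  "valid_tasks p I sig par t \<longleftrightarrow> p \<ge> 1 \<and> finite I \<and>
     (\<forall>i\<in>I. t i \<ge> 0 \<and> sig i > 0 \<and> sig i \<le> par i \<and> par i \<le> real p * sig i)"

text \<open>(s, c) is a possible execution of UNK (for some choice of the nondeterministic
  task selections).\<close>
definition UNK_run :: "nat \<Rightarrow> 'a set \<Rightarrow> ('a \<Rightarrow> real) \<Rightarrow> ('a \<Rightarrow> real) \<Rightarrow> ('a \<Rightarrow> real)
    \<Rightarrow> ('a \<Rightarrow> real) \<Rightarrow> ('a \<Rightarrow> real) \<Rightarrow> bool" where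
  "UNK_run p I sig par t s c \<longleftrightarrow>
     \<comment> \<open>tasks start only after arrival\<close>
     (\<forall>i\<in>I. t i \<le> s i) \<and>
     \<comment> \<open>a serial job runs on one processor from its start until completion\<close>
     (\<forall>i\<in>I. is_serial sig t s i \<longrightarrow> c i = s i + sig i) \<and>
     \<comment> \<open>a parallel job gets all processors not used by serial jobs; c i is the
         first time its parallel work par i is done\<close>
     (\<forall>i\<in>I. \<not> is_serial sig t s i \<longrightarrow>
        s i < c i \<and>
        integral {s i..c i} (\<lambda>x. real p - real (nser I sig t s c x)) = par i \<and>
        (\<forall>y. s i \<le> y \<and> y < c i \<longrightarrow>
           integral {s i..y} (\<lambda>x. real p - real (nser I sig t s c x)) < par i)) \<and>
     \<comment> \<open>at most p serial jobs run at a time\<close>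
     (\<forall>x. nser I sig t s c x \<le> p) \<and>
     \<comment> \<open>no task is started while a parallel job runs (no idle processors then)\<close>
     (\<forall>i\<in>I. \<forall>j\<in>I. j \<noteq> i \<and> \<not> is_serial sig t s j \<longrightarrow> \<not> (s j < s i \<and> s i < c j)) \<and>
     (\<forall>i\<in>I. \<forall>j\<in>I. j \<noteq> i \<and> \<not> is_serial sig t s i \<and> \<not> is_serial sig t s j \<longrightarrow> s i \<noteq> s j) \<and>
     \<comment> \<open>a parallel job is started only if some processor is idle\<close>
     (\<forall>i\<in>I. \<not> is_serial sig t s i \<longrightarrow> nser I sig t s c (s i) < p) \<and>
     \<comment> \<open>greedy: whenever an arrived task is still unstarted, no processor is idle\<close>
     (\<forall>x. (\<exists>i\<in>I. t i \<le> x \<and> x < s i) \<longrightarrow> saturated p I sig t s c x)"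

definition alive :: "('a \<Rightarrow> real) \<Rightarrow> ('a \<Rightarrow> real) \<Rightarrow> 'a \<Rightarrow> real \<Rightarrow> bool" where
  "alive t c i x \<longleftrightarrow> t i \<le> x \<and> x < c i"

definition run_period :: "'a set \<Rightarrow> ('a \<Rightarrow> real) \<Rightarrow> real set" where
  "run_period I c = {x. 0 \<le> x \<and> (\<exists>j\<in>I. x < c j)}"

end

theory Submission
  imports Defs
begin

lemma key:
  fixes U Q :: "real set" and S :: "'a set" and a s c :: "'a \<Rightarrow> real"
  assumes fin: "finite S"
    and Uf: "U \<in> fmeasurable lborel" and Qf: "Q \<in> fmeasurable lborel"
    and disj: "U \<inter> Q = {}"
    and cover: "\<forall>x\<in>U. \<exists>k\<in>S. s k \<le> x \<and> x < c k"
    and len: "\<forall>k\<in>S. a k < s k \<and> c k - s k \<le> s k - a k"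
    and sat: "\<forall>k\<in>S. {a k..<s k} \<subseteq> Q"
  shows "card {k\<in>S. s k < T} \<le> n \<Longrightarrow> measure lborel (U \<inter> {..<T}) \<le> measure lborel (Q \<inter> {..<T})"
proof (induction n arbitrary: T)
  case 0
  then have "{k\<in>S. s k < T} = {}" using fin by simp
  then have "U \<inter> {..<T} = {}" using cover by fastforce
  then show ?case by simp
next
  case (Suc n)
  define ST where "ST = {k\<in>S. s k < T}"
  have finST: "finite ST" using fin ST_def by simp
  show ?case
  proof (cases "ST = {}")
    case True
    then have "U \<inter> {..<T} = {}" using cover ST_def by fastforce
    then show ?thesis by simp
  next
    case False
    obtain j where jST: "j \<in> ST" and jmax: "\<forall>k\<in>ST. c k \<le> c j"
    proof -
      have "Max (c ` ST) \<in> c ` ST" using finST False by simp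
      then obtain j where "j \<in> ST" "c j = Max (c ` ST)" by auto
      moreover have "\<forall>k\<in>ST. c k \<le> Max (c ` ST)" using finST by simp
      ultimately show ?thesis using that by auto
    qed
    have jS: "j \<in> S" and sjT: "s j < T" using jST ST_def by auto
    have ajs: "a j < s j" and cj: "c j - s j \<le> s j - a j" using len jS by auto
    have IH: "measure lborel (U \<inter> {..<a j}) \<le> measure lborel (Q \<inter> {..<a j})"
    proof (rule Suc.IH)
      have sub: "{k\<in>S. s k < a j} \<subseteq> ST - {j}" using ST_def ajs sjT by auto
      have "card {k\<in>S. s k < a j} \<le> card (ST - {j})"
        using card_mono[OF _ sub] finST by simp
      also have "\<dots> = card ST - 1" using jST finST by simp
      finally show "card {k\<in>S. s k < a j} \<le> n" using Suc.prems ST_def by simp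
    qed
    have Usub: "U \<inter> {a j..<T} \<subseteq> {s j..<min (c j) T}"
    proof
      fix x assume x: "x \<in> U \<inter> {a j..<T}"
      then obtain k where k: "k \<in> S" "s k \<le> x" "x < c k" using cover by auto
      then have "k \<in> ST" using ST_def x by auto
      then have "x < c j" using jmax k by fastforce
      moreover have "\<not> x < s j"
      proof
        assume "x < s j"
        then have "x \<in> {a j..<s j}" using x by auto
        then have "x \<in> Q" using sat jS by blast
        then show False using x disj by auto
      qed
      ultimately show "x \<in> {s j..<min (c j) T}" using x by auto
    qed
    have Um: "U \<inter> X \<in> fmeasurable lborel" if "X \<in> sets lborel" for X
      using fmeasurableI2[OF Uf, of "U \<inter> X"] that Uf by (auto simp: fmeasurable_def)
    have Qm: "Q \<inter> X \<in> fmeasurable lborel" if "X \<in> sets lborel" for X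
      using fmeasurableI2[OF Qf, of "Q \<inter> X"] that Qf by (auto simp: fmeasurable_def)
    have m1: "measure lborel (U \<inter> {a j..<T}) \<le> measure lborel {s j..<min (c j) T}"
    proof (rule measure_mono_fmeasurable[OF Usub])
      show "U \<inter> {a j..<T} \<in> sets lborel" using fmeasurableD[OF Um[of "{a j..<T}"]] by simp
      show "{s j..<min (c j) T} \<in> fmeasurable lborel"
      proof (rule fmeasurableI2[OF fmeasurable_cbox[of "s j" "min (c j) T"]])
        show "{s j..<min (c j) T} \<subseteq> cbox (s j) (min (c j) T)" by (auto simp: cbox_interval)
      qed simp
    qed
    have m2: "measure lborel {s j..<min (c j) T} \<le> s j - a j"
    proof (cases "s j \<le> min (c j) T")
      case True then show ?thesis using cj sjT by auto
    next
      case False then show ?thesis using ajs by auto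
    qed
    have sub2: "{a j..<s j} \<subseteq> Q \<inter> {a j..<T}" using sat jS sjT by auto
    have m3: "s j - a j \<le> measure lborel (Q \<inter> {a j..<T})"
    proof -
      have "measure lborel {a j..<s j} \<le> measure lborel (Q \<inter> {a j..<T})"
        by (rule measure_mono_fmeasurable[OF sub2]) (use Qm[of "{a j..<T}"] in auto)
      then show ?thesis using ajs by simp
    qed
    have eU: "U \<inter> {..<T} = (U \<inter> {..<a j}) \<union> (U \<inter> {a j..<T})" using ajs sjT by auto
    have eQ: "Q \<inter> {..<T} = (Q \<inter> {..<a j}) \<union> (Q \<inter> {a j..<T})" using ajs sjT by auto
    have "measure lborel (U \<inter> {..<T}) = measure lborel (U \<inter> {..<a j}) + measure lborel (U \<inter> {a j..<T})"
      unfolding eU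
    proof (rule measure_Union)
      have A: "U \<inter> {..<a j} \<in> fmeasurable lborel" by (rule Um) simp
      have B: "U \<inter> {a j..<T} \<in> fmeasurable lborel" by (rule Um) simp
      show "emeasure lborel (U \<inter> {..<a j}) \<noteq> \<infinity>" using fmeasurableD2[OF A] by simp
      show "emeasure lborel (U \<inter> {a j..<T}) \<noteq> \<infinity>" using fmeasurableD2[OF B] by simp
      show "U \<inter> {..<a j} \<in> sets lborel" using fmeasurableD[OF A] .
      show "U \<inter> {a j..<T} \<in> sets lborel" using fmeasurableD[OF B] .
      show "(U \<inter> {..<a j}) \<inter> (U \<inter> {a j..<T}) = {}" by auto
    qed
    moreover have "measure lborel (Q \<inter> {..<T}) = measure lborel (Q \<inter> {..<a j}) + measure lborel (Q \<inter> {a j..<T})"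
      unfolding eQ
    proof (rule measure_Union)
      have A: "Q \<inter> {..<a j} \<in> fmeasurable lborel" by (rule Qm) simp
      have B: "Q \<inter> {a j..<T} \<in> fmeasurable lborel" by (rule Qm) simp
      show "emeasure lborel (Q \<inter> {..<a j}) \<noteq> \<infinity>" using fmeasurableD2[OF A] by simp
      show "emeasure lborel (Q \<inter> {a j..<T}) \<noteq> \<infinity>" using fmeasurableD2[OF B] by simp
      show "Q \<inter> {..<a j} \<in> sets lborel" using fmeasurableD[OF A] .
      show "Q \<inter> {a j..<T} \<in> sets lborel" using fmeasurableD[OF B] .
      show "(Q \<inter> {..<a j}) \<inter> (Q \<inter> {a j..<T}) = {}" by auto
    qed
    ultimately show ?thesis using IH m1 m2 m3 by linarith
  qed
qed

theorem lemma5p2: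
  assumes "valid_tasks p I sig par t"
    and "UNK_run p I sig par t s c"
    and "\<forall>x\<in>run_period I c. \<exists>i\<in>I. alive t c i x"
  shows "measure lborel {x \<in> run_period I c. \<not> saturated p I sig t s c x}
           \<le> measure lborel (run_period I c) / 2"
proof -
  define P where "P = run_period I c"
  define U where "U = {x \<in> P. \<not> saturated p I sig t s c x}"
  define Q where "Q = {x \<in> P. saturated p I sig t s c x}"
  have finI: "finite I" and tpos: "\<forall>i\<in>I. t i \<ge> 0 \<and> sig i > 0"
    using assms(1) unfolding valid_tasks_def by auto
  have serc: "\<forall>i\<in>I. is_serial sig t s i \<longrightarrow> c i = s i + sig i"
    using assms(2) unfolding UNK_run_def by (elim conjE) assumption
  have greedy: "\<forall>x. (\<exists>i\<in>I. t i \<le> x \<and> x < s i) \<longrightarrow> saturated p I sig t s c x"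
    using assms(2) unfolding UNK_run_def by (elim conjE) assumption
  have alive: "\<forall>x\<in>P. \<exists>i\<in>I. t i \<le> x \<and> x < c i"
    using assms(3) unfolding P_def alive_def by blast
  show ?thesis
  proof (cases "U \<in> sets lborel \<and> I \<noteq> {}")
    case False
    then consider "U \<notin> sets lborel" | "I = {}" by blast
    then show ?thesis
    proof cases
      case 1
      then have "measure lborel U = 0" by (simp add: measure_notin_sets)
      then show ?thesis unfolding U_def P_def by simp
    next
      case 2
      then have "run_period I c = {}" unfolding run_period_def by simp
      then show ?thesis by simp
    qed
  next
    case True
    then have Us: "U \<in> sets lborel" and Ine: "I \<noteq> {}" by auto
    define M where "M = Max (c ` I)"
    have Mg: "\<And>x. x < M \<longleftrightarrow> (\<exists>j\<in>I. x < c j)"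
      unfolding M_def using finI Ine by (simp add: Max_gr_iff)
    have Peq: "P = {0..<M}"
      unfolding P_def run_period_def using Mg by auto
    have Pf: "P \<in> fmeasurable lborel"
    proof (rule fmeasurableI2[OF fmeasurable_cbox[of 0 M]])
      show "P \<subseteq> cbox 0 M" unfolding Peq by (auto simp: cbox_interval)
    qed (simp add: Peq)
    have Uf: "U \<in> fmeasurable lborel"
      by (rule fmeasurableI2[OF Pf]) (use Us in \<open>auto simp: U_def\<close>)
    have QPU: "Q = P - U" unfolding Q_def U_def by auto
    have Qf: "Q \<in> fmeasurable lborel" unfolding QPU using Pf Uf by (rule fmeasurable.Diff)
    have PUQ: "P = U \<union> Q" unfolding Q_def U_def by auto
    have mP: "measure lborel P = measure lborel U + measure lborel Q"
      unfolding PUQ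
    proof (rule measure_Union)
      show "emeasure lborel U \<noteq> \<infinity>" using fmeasurableD2[OF Uf] by simp
      show "emeasure lborel Q \<noteq> \<infinity>" using fmeasurableD2[OF Qf] by simp
      show "U \<in> sets lborel" using fmeasurableD[OF Uf] .
      show "Q \<in> sets lborel" using fmeasurableD[OF Qf] .
      show "U \<inter> Q = {}" unfolding U_def Q_def by auto
    qed
    define S where "S = {k\<in>I. is_serial sig t s k}"
    define a where "a = (\<lambda>k. s k - sig k)"
    have cover: "\<forall>x\<in>U. \<exists>k\<in>S. s k \<le> x \<and> x < c k"
    proof
      fix x assume xU: "x \<in> U"
      then have xP: "x \<in> P" and ns: "\<not> saturated p I sig t s c x" unfolding U_def by auto
      obtain i where i: "i \<in> I" "t i \<le> x" "x < c i" using alive xP by blast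
      have "s i \<le> x"
      proof (rule ccontr)
        assume "\<not> s i \<le> x"
        then have "\<exists>i\<in>I. t i \<le> x \<and> x < s i" using i by auto
        then have "saturated p I sig t s c x" using greedy by blast
        then show False using ns by simp
      qed
      moreover have "is_serial sig t s i"
      proof (rule ccontr)
        assume "\<not> is_serial sig t s i"
        then have "par_active I sig t s c x" unfolding par_active_def
          using i \<open>s i \<le> x\<close> by blast
        then show False using ns unfolding saturated_def by simp
      qed
      ultimately show "\<exists>k\<in>S. s k \<le> x \<and> x < c k" using i S_def by blast
    qed
    have len: "\<forall>k\<in>S. a k < s k \<and> c k - s k \<le> s k - a k"
      using tpos serc unfolding S_def a_def by auto
    have sat: "\<forall>k\<in>S. {a k..<s k} \<subseteq> Q"
    proof (intro ballI subsetI)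
      fix k y assume k: "k \<in> S" and y: "y \<in> {a k..<s k}"
      have kI: "k \<in> I" and ser: "is_serial sig t s k" using k S_def by auto
      have tk: "t k < s k - sig k" using ser unfolding is_serial_def by simp
      have "0 \<le> t k" "0 < sig k" using tpos kI by auto
      moreover have "c k = s k + sig k" using serc kI ser by auto
      ultimately have y0: "0 \<le> y" and yc: "y < c k" using y tk unfolding a_def by auto
      have yP: "y \<in> P" unfolding P_def run_period_def using y0 yc kI by blast
      have "\<exists>i\<in>I. t i \<le> y \<and> y < s i" using kI y tk unfolding a_def
        by (intro bexI[of _ k]) auto
      then have "saturated p I sig t s c y" using greedy by blast
      with yP show "y \<in> Q" unfolding Q_def by simp
    qed
    have "measure lborel (U \<inter> {..<M}) \<le> measure lborel (Q \<inter> {..<M})"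
    proof -
      have fS: "finite S" unfolding S_def using finI by simp
      have dj: "U \<inter> Q = {}" unfolding U_def Q_def by blast
      show ?thesis using key[OF fS Uf Qf dj cover len sat, where T = M and n = "card {k\<in>S. s k < M}"]
        by simp
    qed
    moreover have "U \<inter> {..<M} = U" "Q \<inter> {..<M} = Q" using Peq unfolding U_def Q_def by auto
    ultimately have "measure lborel U \<le> measure lborel Q" by simp
    then show ?thesis using mP unfolding U_def P_def by simp
  qed
qed

end
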